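(* Let $G$ be a group with a finite-index normal subgroup $A\cong\mathbb{Z}^2$. Suppose there is $g\in G$ such that the automorphism $a\mapsto g^{-1}ag$ of $A$ is neither the identity map nor the inversion map. Then $G$ has quadratic automorphic growth.
   Context: For a finitely generated group $G$ with finite generating set $\Sigma$, the automorphic growth function sends $n$ to the number of $\operatorname{Aut}(G)$-orbits of $G$ containing an element of word length at most $n$. Quadratic means it is $\sim$-equivalent to $n\mapsto n^2$, where $f\sim g$ iff $f\preccurlyeq g$ and $g\preccurlyeq f$, and $f\preccurlyeq g$ means there is $\lambda\in\mathbb{N}\setminus\{0\}$ with $f(n)\le\lambda g(\lambda n+\lambda)+\lambda$ for all $n$ (this is independent of $\Sigma$). *)

theory Defs
  imports "HOL-Algebra.Algebra"
begin

definition word_ball :: "('a, 'b) monoid_scheme \<Rightarrow> 'a set \<Rightarrow> nat \<Rightarrow> 'a set" where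
  "word_ball G S n =
     {foldr (\<lambda>x y. x \<otimes>\<^bsub>G\<^esub> y) xs \<one>\<^bsub>G\<^esub> | xs.
        length xs \<le> n \<and> set xs \<subseteq> S \<union> (\<lambda>s. inv\<^bsub>G\<^esub> s) ` S}"

definition aut_orbit :: "('a, 'b) monoid_scheme \<Rightarrow> 'a \<Rightarrow> 'a set" where
  "aut_orbit G x = (\<lambda>f. f x) ` iso G G"

definition aut_growth :: "('a, 'b) monoid_scheme \<Rightarrow> 'a set \<Rightarrow> nat \<Rightarrow> nat" where
  "aut_growth G S n = card (aut_orbit G ` word_ball G S n)"

definition growth_le :: "(nat \<Rightarrow> nat) \<Rightarrow> (nat \<Rightarrow> nat) \<Rightarrow> bool" where
  "growth_le f g \<longleftrightarrow> (\<exists>c::nat. c \<noteq> 0 \<and> (\<forall>n. f n \<le> c * g (c * n + c) + c))"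

definition growth_equiv :: "(nat \<Rightarrow> nat) \<Rightarrow> (nat \<Rightarrow> nat) \<Rightarrow> bool" where
  "growth_equiv f g \<longleftrightarrow> growth_le f g \<and> growth_le g f"

definition finite_generating_set :: "('a, 'b) monoid_scheme \<Rightarrow> 'a set \<Rightarrow> bool" where
  "finite_generating_set G S \<longleftrightarrow> finite S \<and> S \<subseteq> carrier G \<and> generate G S = carrier G"

definition quadratic_aut_growth :: "('a, 'b) monoid_scheme \<Rightarrow> bool" where
  "quadratic_aut_growth G \<longleftrightarrow>
     (\<exists>S. finite_generating_set G S) \<and>
     (\<forall>S. finite_generating_set G S \<longrightarrow> growth_equiv (aut_growth G S) (\<lambda>n. n ^ 2))"

end

theory Submission
  imports Defs
begin

declare int.le_trans[trans del] int.lless_trans[trans del] int.le_cong_l[trans del] int.le_cong_r[trans del]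
  int.lless_cong_l[trans del] int.lless_cong_r[trans del]

context group begin

lemma foldr_mult_eq: "set xs \<subseteq> carrier G \<Longrightarrow> z \<in> carrier G \<Longrightarrow>
   foldr (\<lambda>x y. x \<otimes> y) xs z = foldr (\<lambda>x y. x \<otimes> y) xs \<one> \<otimes> z"
proof (induction xs)
  case Nil then show ?case by simp
next
  case (Cons a xs)
  have c: "foldr (\<lambda>x y. x \<otimes> y) xs \<one> \<in> carrier G"
    using Cons.prems by (induction xs) auto
  show ?case using Cons c by (simp add: m_assoc)
qed

lemma foldr_closed: "set xs \<subseteq> carrier G \<Longrightarrow> foldr (\<lambda>x y. x \<otimes> y) xs \<one> \<in> carrier G"
  by (induction xs) auto

lemma wb_sub: "S \<subseteq> carrier G \<Longrightarrow> word_ball G S n \<subseteq> carrier G"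
  unfolding word_ball_def using foldr_closed by blast

lemma wb_mono: "n \<le> m \<Longrightarrow> word_ball G S n \<subseteq> word_ball G S m"
  unfolding word_ball_def by fastforce

lemma wb_fin: assumes "finite S" shows "finite (word_ball G S n)"
proof -
  have "finite {xs. set xs \<subseteq> S \<union> (\<lambda>s. inv s) ` S \<and> length xs \<le> n}"
    using assms by (intro finite_lists_length_le) auto
  then have "finite ((\<lambda>xs. foldr (\<lambda>x y. x \<otimes> y) xs \<one>) ` {xs. set xs \<subseteq> S \<union> (\<lambda>s. inv s) ` S \<and> length xs \<le> n})"
    by blast
  moreover have "word_ball G S n = (\<lambda>xs. foldr (\<lambda>x y. x \<otimes> y) xs \<one>) ` {xs. set xs \<subseteq> S \<union> (\<lambda>s. inv s) ` S \<and> length xs \<le> n}"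
    unfolding word_ball_def by blast
  ultimately show ?thesis by simp
qed

lemma wb_one: "\<one> \<in> word_ball G S n"
  unfolding word_ball_def by (rule CollectI, rule exI[of _ "[]"]) simp

lemma wb_gen: "S \<subseteq> carrier G \<Longrightarrow> s \<in> S \<Longrightarrow> s \<in> word_ball G S 1"
  unfolding word_ball_def by (rule CollectI, rule exI[of _ "[s]"]) auto

lemma wb_geninv: "S \<subseteq> carrier G \<Longrightarrow> s \<in> S \<Longrightarrow> inv s \<in> word_ball G S 1"
  unfolding word_ball_def by (rule CollectI, rule exI[of _ "[inv s]"]) auto

lemma wb_mult: assumes "S \<subseteq> carrier G" "x \<in> word_ball G S n" "y \<in> word_ball G S m"
  shows "x \<otimes> y \<in> word_ball G S (n + m)"
proof -
  obtain xs where xs: "x = foldr (\<lambda>x y. x \<otimes> y) xs \<one>" "length xs \<le> n" "set xs \<subseteq> S \<union> (\<lambda>s. inv s) ` S"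
    using assms(2) unfolding word_ball_def by blast
  obtain ys where ys: "y = foldr (\<lambda>x y. x \<otimes> y) ys \<one>" "length ys \<le> m" "set ys \<subseteq> S \<union> (\<lambda>s. inv s) ` S"
    using assms(3) unfolding word_ball_def by blast
  have cs: "S \<union> (\<lambda>s. inv s) ` S \<subseteq> carrier G" using assms(1) by auto
  have "foldr (\<lambda>x y. x \<otimes> y) (xs @ ys) \<one> = foldr (\<lambda>x y. x \<otimes> y) xs y"
    using ys(1) by simp
  also have "\<dots> = x \<otimes> y" using foldr_mult_eq[of xs y] xs ys cs foldr_closed by blast
  finally show ?thesis unfolding word_ball_def using xs ys by (intro CollectI exI[of _ "xs @ ys"]) auto
qed

lemma foldr_inv: "set xs \<subseteq> carrier G \<Longrightarrow>
  inv (foldr (\<lambda>x y. x \<otimes> y) xs \<one>) = foldr (\<lambda>x y. x \<otimes> y) (rev (map (\<lambda>s. inv s) xs)) \<one>"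
proof (induction xs)
  case Nil then show ?case by simp
next
  case (Cons a xs)
  have c: "foldr (\<lambda>x y. x \<otimes> y) xs \<one> \<in> carrier G" using Cons.prems foldr_closed by auto
  have c2: "set (rev (map (\<lambda>s. inv s) xs)) \<subseteq> carrier G" using Cons.prems by auto
  have "inv (foldr (\<lambda>x y. x \<otimes> y) (a # xs) \<one>) = inv (foldr (\<lambda>x y. x \<otimes> y) xs \<one>) \<otimes> inv a"
    using Cons.prems c by (simp add: inv_mult_group)
  also have "\<dots> = foldr (\<lambda>x y. x \<otimes> y) (rev (map (\<lambda>s. inv s) xs)) (inv a)"
    using Cons foldr_mult_eq[OF c2, of "inv a"] by simp
  finally show ?case using Cons.prems by simp
qed

lemma wb_inv: assumes "S \<subseteq> carrier G" "x \<in> word_ball G S n"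
  shows "inv x \<in> word_ball G S n"
proof -
  obtain xs where xs: "x = foldr (\<lambda>x y. x \<otimes> y) xs \<one>" "length xs \<le> n" "set xs \<subseteq> S \<union> (\<lambda>s. inv s) ` S"
    using assms(2) unfolding word_ball_def by blast
  have cs: "S \<union> (\<lambda>s. inv s) ` S \<subseteq> carrier G" using assms(1) by auto
  have "set (rev (map (\<lambda>s. inv s) xs)) \<subseteq> S \<union> (\<lambda>s. inv s) ` S"
  proof
    fix z assume "z \<in> set (rev (map (\<lambda>s. inv s) xs))"
    then obtain s where s: "s \<in> set xs" "z = inv s" by auto
    then show "z \<in> S \<union> (\<lambda>s. inv s) ` S" using xs(3) assms(1) by (auto simp: subset_iff)
  qed
  then show ?thesis using foldr_inv[of xs] xs cs unfolding word_ball_def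
    by (intro CollectI exI[of _ "rev (map (\<lambda>s. inv s) xs)"]) auto
qed

lemma gen_wb: assumes "S \<subseteq> carrier G" "x \<in> generate G S" shows "\<exists>n. x \<in> word_ball G S n"
  using assms(2)
proof (induction rule: generate.induct)
  case one then show ?case using wb_one by blast
next
  case (incl h) then show ?case using wb_gen assms(1) by blast
next
  case (inv h) then show ?case using wb_geninv assms(1) by blast
next
  case (eng h1 h2)
  then show ?case using wb_mult assms(1) by blast
qed

lemma wb_pow: assumes "S \<subseteq> carrier G" "x \<in> word_ball G S n"
  shows "x [^] (k::nat) \<in> word_ball G S (n * k)"
proof (induction k)
  case 0 then show ?case using wb_one by simp
next
  case (Suc k)
  have "x [^] k \<otimes> x \<in> word_ball G S (n * k + n)" using wb_mult[OF assms(1) Suc assms(2)] .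
  then show ?case by (simp add: algebra_simps)
qed

lemma wb_ipow: assumes "S \<subseteq> carrier G" "x \<in> word_ball G S n"
  shows "x [^] (k::int) \<in> word_ball G S (n * nat \<bar>k\<bar>)"
proof (cases "k < 0")
  case True
  then have "x [^] k = inv (x [^] nat (-k))" by (metis int_pow_def2)
  moreover have "nat (-k) = nat \<bar>k\<bar>" using True by simp
  ultimately show ?thesis using wb_inv[OF assms(1) wb_pow[OF assms]] by metis
next
  case False
  then have "x [^] k = x [^] nat k" by (metis int_pow_def2)
  moreover have "nat k = nat \<bar>k\<bar>" using False by simp
  ultimately show ?thesis using wb_pow[OF assms] by metis
qed

end

type_synonym m2 = "int \<times> int \<times> int \<times> int"

fun ap :: "m2 \<Rightarrow> int \<times> int \<Rightarrow> int \<times> int" where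
  "ap (a,b,c,d) (x,y) = (a*x+b*y, c*x+d*y)"

fun mdt :: "m2 \<Rightarrow> int" where "mdt (a,b,c,d) = a*d - b* c"
fun mtr :: "m2 \<Rightarrow> int" where "mtr (a,b,c,d) = a + d"

definition QQ :: "m2 \<Rightarrow> int \<times> int \<Rightarrow> int" where
  "QQ M w = fst w * snd (ap M w) - snd w * fst (ap M w)"

definition scalar :: "m2 \<Rightarrow> bool" where
  "scalar M \<longleftrightarrow> (\<exists>a b c d. M = (a,b,c,d) \<and> b = 0 \<and> c = 0 \<and> a = d)"

definition goodm :: "m2 \<Rightarrow> bool" where
  "goodm M \<longleftrightarrow> (mtr M)^2 < 4 * mdt M \<or> (mdt M = -1 \<and> mtr M = 0)"

lemma abs_le_of_prod: fixes x y K :: int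
  assumes "x * y \<noteq> 0" "\<bar>x * y\<bar> \<le> K" shows "\<bar>x\<bar> \<le> K"
proof -
  have "\<bar>y\<bar> \<ge> 1" using assms(1) by auto
  then have "\<bar>x\<bar> * 1 \<le> \<bar>x\<bar> * \<bar>y\<bar>" by (intro mult_left_mono) auto
  then show ?thesis using assms(2) by (simp add: abs_mult)
qed

lemma abs_le_cmul: fixes c x :: int assumes "c \<noteq> 0" shows "\<bar>x\<bar> \<le> \<bar>c*x\<bar>"
proof -
  have "1 * \<bar>x\<bar> \<le> \<bar>c\<bar> * \<bar>x\<bar>" using assms by (intro mult_right_mono) auto
  then show ?thesis by (simp add: abs_mult)
qed

lemma abs_le_sq: "\<bar>x::int\<bar> \<le> x^2"
  by (cases "x = 0") (auto simp: power2_eq_square abs_mult intro!: abs_le_of_prod[of x x "x*x", simplified abs_mult_self_eq])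

lemma bound_good:
  fixes M :: m2 and K :: int
  assumes "goodm M"
  shows "\<exists>B. \<forall>w. QQ M w \<noteq> 0 \<and> \<bar>QQ M w\<bar> \<le> K \<longrightarrow> \<bar>fst w\<bar> \<le> B \<and> \<bar>snd w\<bar> \<le> B"
proof -
  obtain a b c d where M: "M = (a,b,c,d)" by (cases M) auto
  have Q: "QQ M (x,y) = c*x*x + (d-a)*x*y - b*y*y" for x y
    unfolding QQ_def M by (simp add: algebra_simps)
  consider (neg) "(a+d)^2 < 4*(a*d-b* c)" | (refl) "a*d-b* c = -1" "a + d = 0"
    using assms unfolding goodm_def M by auto
  then show ?thesis
  proof cases
    case neg
    have c0: "c \<noteq> 0"
    proof
      assume "c = 0"
      then have "(a-d)^2 < 0" using neg by (simp add: power2_eq_square algebra_simps)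
      then show False by simp
    qed
    define E where "E = 4*(a*d-b* c) - (a+d)^2"
    have E0: "E \<ge> 1" using neg E_def by simp
    define B where "B = 4*\<bar>c\<bar>*K + \<bar>d-a\<bar>*(4*\<bar>c\<bar>*K)"
    show ?thesis
    proof (intro exI[of _ B] allI impI)
      fix w assume w: "QQ M w \<noteq> 0 \<and> \<bar>QQ M w\<bar> \<le> K"
      obtain x y where wxy: "w = (x,y)" by (cases w) auto
      define XV where "XV = 2* c*x + (d-a)*y"
      have id: "4* c*QQ M w = XV^2 + E*y^2"
        unfolding wxy Q XV_def E_def by (simp add: power2_eq_square algebra_simps)
      have le: "4* c*QQ M w \<le> 4*\<bar>c\<bar>*K"
      proof -
        have "4* c*QQ M w \<le> \<bar>4* c*QQ M w\<bar>" by simp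
        also have "\<dots> = 4*\<bar>c\<bar>*\<bar>QQ M w\<bar>" by (simp add: abs_mult)
        also have "\<dots> \<le> 4*\<bar>c\<bar>*K" using w by (intro mult_left_mono) auto
        finally show ?thesis .
      qed
      have y2: "y^2 \<le> E*y^2" using mult_right_mono[of 1 E "y^2"] E0 by simp
      have X2: "XV^2 \<le> 4*\<bar>c\<bar>*K" using id le y2 by (smt (verit) zero_le_power2)
      have Y2: "y^2 \<le> 4*\<bar>c\<bar>*K" using id le y2 by (smt (verit) zero_le_power2)
      have ay: "\<bar>y\<bar> \<le> 4*\<bar>c\<bar>*K" using Y2 abs_le_sq[of y] by linarith
      have aX: "\<bar>XV\<bar> \<le> 4*\<bar>c\<bar>*K" using X2 abs_le_sq[of XV] by linarith
      have "\<bar>x\<bar> \<le> \<bar>2* c*x\<bar>" using c0 abs_le_cmul[of "2* c" x] by simp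
      also have "\<bar>2* c*x\<bar> = \<bar>XV - (d-a)*y\<bar>" unfolding XV_def by simp
      also have "\<dots> \<le> \<bar>XV\<bar> + \<bar>d-a\<bar>*\<bar>y\<bar>" by (simp add: abs_mult[symmetric] abs_triangle_ineq4)
      also have "\<dots> \<le> B" unfolding B_def using aX ay by (intro add_mono mult_left_mono) auto
      finally have "\<bar>x\<bar> \<le> B" .
      moreover have "\<bar>y\<bar> \<le> B" using ay unfolding B_def by (smt (verit) abs_ge_zero mult_nonneg_nonneg)
      ultimately show "\<bar>fst w\<bar> \<le> B \<and> \<bar>snd w\<bar> \<le> B" using wxy by simp
    qed
  next
    case refl
    have dA: "d = -a" using refl by simp
    have abc: "a*a + b* c = 1" using refl dA by (simp add: algebra_simps)
    show ?thesis
    proof (cases "c = 0")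
      case True
      have "a * a = 1" using abc True by simp
      then have "a = 1 \<or> a = -1" using pos_zmult_eq_1_iff_lemma by blast
      then have a1: "\<bar>a\<bar> = 1" by auto
      define B where "B = \<bar>K\<bar> + \<bar>b\<bar>*\<bar>K\<bar>"
      show ?thesis
      proof (intro exI[of _ B] allI impI)
        fix w assume w: "QQ M w \<noteq> 0 \<and> \<bar>QQ M w\<bar> \<le> K"
        obtain x y where wxy: "w = (x,y)" by (cases w) auto
        have id: "QQ M w = (-y) * (2*a*x + b*y)" unfolding wxy Q using True dA by (simp add: algebra_simps)
        have ay: "\<bar>y\<bar> \<le> K" using abs_le_of_prod[of "-y" "2*a*x + b*y" K] w id by simp
        have az: "\<bar>2*a*x + b*y\<bar> \<le> K" using abs_le_of_prod[of "2*a*x + b*y" "-y" K] w id by (simp add: mult.commute)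
        have "\<bar>x\<bar> \<le> \<bar>2*a*x\<bar>" using a1 by (simp add: abs_mult)
        also have "\<dots> = \<bar>(2*a*x + b*y) - b*y\<bar>" by simp
        also have "\<dots> \<le> \<bar>2*a*x + b*y\<bar> + \<bar>b\<bar>*\<bar>y\<bar>" by (simp add: abs_mult[symmetric] abs_triangle_ineq4)
        also have "\<dots> \<le> B" unfolding B_def using az ay by (intro add_mono mult_left_mono) auto
        finally have "\<bar>x\<bar> \<le> B" .
        moreover have "\<bar>y\<bar> \<le> B" using ay unfolding B_def by (smt (verit) abs_ge_zero mult_nonneg_nonneg)
        ultimately show "\<bar>fst w\<bar> \<le> B \<and> \<bar>snd w\<bar> \<le> B" using wxy by simp
      qed
    next
      case False
      define K' where "K' = \<bar>c\<bar>*\<bar>K\<bar>"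
      define B where "B = K' + (\<bar>a\<bar>+1)*K'"
      show ?thesis
      proof (intro exI[of _ B] allI impI)
        fix w assume w: "QQ M w \<noteq> 0 \<and> \<bar>QQ M w\<bar> \<le> K"
        obtain x y where wxy: "w = (x,y)" by (cases w) auto
        define f1 where "f1 = c*x - a*y - y"
        define f2 where "f2 = c*x - a*y + y"
        have "c * QQ M w - f1 * f2 = y*y * (1 - (a*a + b* c))" unfolding wxy Q f1_def f2_def dA
          by (simp add: algebra_simps)
        then have id: "c * QQ M w = f1 * f2" using abc by simp
        have nz: "f1 * f2 \<noteq> 0" unfolding id[symmetric] using w False by (simp del: mult_eq_0_iff add: mult_eq_0_iff)
        have le: "\<bar>f1 * f2\<bar> \<le> K'" unfolding K'_def id[symmetric] abs_mult
          using w by (intro mult_left_mono) auto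
        have a1: "\<bar>f1\<bar> \<le> K'" using abs_le_of_prod[OF nz le] .
        have a2: "\<bar>f2\<bar> \<le> K'" using abs_le_of_prod[of f2 f1] nz le by (simp add: mult.commute)
        have "2*y = f2 - f1" unfolding f1_def f2_def by simp
        then have ay: "\<bar>y\<bar> \<le> K'" using a1 a2 by linarith
        have "\<bar>x\<bar> \<le> \<bar>c*x\<bar>" using False by (rule abs_le_cmul)
        also have "c*x = f1 + a*y + y" unfolding f1_def by simp
        also have "\<bar>f1 + a*y + y\<bar> \<le> \<bar>f1\<bar> + \<bar>a\<bar>*\<bar>y\<bar> + \<bar>y\<bar>"
          using abs_triangle_ineq[of "f1 + a*y" y] abs_triangle_ineq[of f1 "a*y"] by (simp add: abs_mult)
        also have "\<dots> = \<bar>f1\<bar> + (\<bar>a\<bar>+1)*\<bar>y\<bar>" by (simp add: algebra_simps)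
        also have "\<dots> \<le> B" unfolding B_def using a1 ay by (intro add_mono mult_left_mono) auto
        finally have "\<bar>x\<bar> \<le> B" .
        moreover have "\<bar>y\<bar> \<le> B" using ay a1 unfolding B_def by (smt (verit) abs_ge_zero mult_nonneg_nonneg)
        ultimately show "\<bar>fst w\<bar> \<le> B \<and> \<bar>snd w\<bar> \<le> B" using wxy by simp
      qed
    qed
  qed
qed


fun pq :: "int \<Rightarrow> int \<Rightarrow> nat \<Rightarrow> int \<times> int" where
  "pq t e 0 = (0, -1)"
| "pq t e (Suc k) = (t * fst (pq t e k) - snd (pq t e k), e * fst (pq t e k))"

lemma pow_pq:
  assumes "M = (a,b,c,d)"
  shows "(ap M ^^ k) v = (fst (pq (a+d) (a*d-b* c) k) * fst (ap M v) - snd (pq (a+d) (a*d-b* c) k) * fst v,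
                          fst (pq (a+d) (a*d-b* c) k) * snd (ap M v) - snd (pq (a+d) (a*d-b* c) k) * snd v)"
proof (induction k)
  case 0 then show ?case by (cases v) simp
next
  case (Suc k)
  obtain x y where v: "v = (x,y)" by (cases v) auto
  obtain p q where pq: "pq (a+d) (a*d-b* c) k = (p,q)" by (cases "pq (a+d) (a*d-b* c) k") auto
  have "(ap M ^^ Suc k) v = ap M ((ap M ^^ k) v)" by simp
  also have "\<dots> = ap M (p * fst (ap M v) - q * fst v, p * snd (ap M v) - q * snd v)" using Suc pq by simp
  finally show ?case using pq unfolding assms v by (simp add: algebra_simps)
qed

lemma pq_rec: "fst (pq t e (Suc (Suc k))) = t * fst (pq t e (Suc k)) - e * fst (pq t e k)"
  by simp

lemma same_sign_abs: fixes x y :: int assumes "x * y \<ge> 0" shows "\<bar>x + y\<bar> = \<bar>x\<bar> + \<bar>y\<bar>"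
proof (cases "x \<ge> 0")
  case True
  then show ?thesis using assms by (cases "x = 0") (auto simp: zero_le_mult_iff)
next
  case False
  then show ?thesis using assms by (auto simp: zero_le_mult_iff)
qed

lemma growth1:
  assumes "\<bar>t\<bar> \<ge> 2"
  shows "\<bar>fst (pq t 1 (Suc k))\<bar> > \<bar>fst (pq t 1 k)\<bar>"
proof (induction k)
  case 0 then show ?case by simp
next
  case (Suc k)
  define p0 where "p0 = fst (pq t 1 k)"
  define p1 where "p1 = fst (pq t 1 (Suc k))"
  have r: "fst (pq t 1 (Suc (Suc k))) = t * p1 - p0" unfolding p0_def p1_def using pq_rec[of t 1 k] by simp
  have "\<bar>t * p1\<bar> \<ge> 2 * \<bar>p1\<bar>" using assms by (simp add: abs_mult mult_right_mono)
  then have "\<bar>t * p1 - p0\<bar> > \<bar>p1\<bar>" using Suc unfolding p0_def[symmetric] p1_def[symmetric] by linarith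
  then show ?case using r p1_def by simp
qed

lemma growth2:
  assumes "t \<noteq> 0"
  shows "\<bar>fst (pq t (-1) (Suc k))\<bar> \<ge> \<bar>fst (pq t (-1) k)\<bar> \<and> fst (pq t (-1) (Suc k)) \<noteq> 0
         \<and> t * fst (pq t (-1) (Suc k)) * fst (pq t (-1) k) \<ge> 0"
proof (induction k)
  case 0 then show ?case by simp
next
  case (Suc k)
  define p0 where "p0 = fst (pq t (-1) k)"
  define p1 where "p1 = fst (pq t (-1) (Suc k))"
  have r: "fst (pq t (-1) (Suc (Suc k))) = t * p1 + p0" unfolding p0_def p1_def using pq_rec[of t "-1" k] by simp
  have IH: "\<bar>p1\<bar> \<ge> \<bar>p0\<bar>" "p1 \<noteq> 0" "t * p1 * p0 \<ge> 0" using Suc unfolding p0_def p1_def by auto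
  have e: "\<bar>t * p1 + p0\<bar> = \<bar>t * p1\<bar> + \<bar>p0\<bar>" using same_sign_abs[of "t*p1" p0] IH(3) by simp
  have "\<bar>t * p1\<bar> \<ge> \<bar>p1\<bar>" using abs_le_cmul[OF assms] by simp
  then have g: "\<bar>t * p1 + p0\<bar> \<ge> \<bar>p1\<bar>" using e by linarith
  have "t * (t * p1 + p0) * p1 = (t*p1)*(t*p1) + t * p1 * p0" by (simp add: algebra_simps)
  then have "t * (t * p1 + p0) * p1 \<ge> 0" using IH(3) by simp
  then show ?case using r g IH(2) p1_def by auto
qed

lemma scalar_ap: "scalar M \<Longrightarrow> \<exists>l. \<forall>v. ap M v = (l * fst v, l * snd v)"
  unfolding scalar_def by (auto simp: split_def)

lemma finite_order_good:
  assumes M: "\<forall>v. (ap M ^^ N) v = v" and N: "N > 0" and ns: "\<not> scalar M"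
  shows "goodm M"
proof -
  obtain a b c d where Md: "M = (a,b,c,d)" by (cases M) auto
  define t where "t = a + d"
  define e where "e = a*d - b* c"
  define p where "p = fst (pq t e N)"
  define q where "q = snd (pq t e N)"
  have e1: "(p*a - q, p* c) = (1, 0)" using pow_pq[OF Md, of N "(1,0)"] M unfolding p_def q_def t_def e_def Md by simp
  have e2: "(p*b, p*d - q) = (0, 1)" using pow_pq[OF Md, of N "(0,1)"] M unfolding p_def q_def t_def e_def Md by simp
  have p0: "p = 0"
  proof (rule ccontr)
    assume pn: "p \<noteq> 0"
    have h: "p* c = 0" "p*b = 0" "p*a - q = 1" "p*d - q = 1" using e1 e2 by auto
    then have cb: "c = 0" "b = 0" using pn by auto
    have "p * a = p * d" using h(3,4) by linarith
    then have "a = d" using pn by simp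
    then show False using ns cb Md unfolding scalar_def by auto
  qed
  obtain k where k: "N = Suc k" using N by (cases N) auto
  have "q = -1" using e1 p0 by simp
  then have "e * fst (pq t e k) = -1" unfolding q_def k by simp
  then have ee: "e = 1 \<or> e = -1" using zmult_eq_neg1_iff by blast
  then show ?thesis
  proof
    assume e1': "e = 1"
    have "\<bar>t\<bar> < 2"
    proof (rule ccontr)
      assume "\<not> \<bar>t\<bar> < 2"
      then have "\<bar>fst (pq t 1 (Suc k))\<bar> > 0" using growth1[of t k] by linarith
      then show False using p0 unfolding p_def k e1' by simp
    qed
    then have t1: "\<bar>t\<bar> \<le> 1" by linarith
    have "\<bar>t\<bar> * \<bar>t\<bar> \<le> 1 * 1" using t1 by (intro mult_mono) auto
    then have "t * t < 4" using abs_mult_self_eq[of t] by simp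
    then show ?thesis unfolding goodm_def using e1' unfolding t_def e_def Md by (simp add: power2_eq_square)
  next
    assume e2': "e = -1"
    have "t = 0"
    proof (rule ccontr)
      assume "t \<noteq> 0"
      then show False using growth2[of t k] p0 unfolding p_def k e2' by simp
    qed
    then show ?thesis unfolding goodm_def using e2' unfolding t_def e_def Md by simp
  qed
qed


lemma intertw_eqs:
  assumes "\<forall>v. ap L (ap M v) = ap M' (ap L v)" "L = (l1,l2,l3,l4)" "M = (a,b,c,d)" "M' = (a',b',c',d')"
  shows "l1*a + l2* c = a'*l1 + b'*l3" "l3*a + l4* c = c'*l1 + d'*l3"
        "l1*b + l2*d = a'*l2 + b'*l4" "l3*b + l4*d = c'*l2 + d'*l4"
proof -
  have "ap L (ap M (1,0)) = ap M' (ap L (1,0))" "ap L (ap M (0,1)) = ap M' (ap L (0,1))" using assms(1) by auto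
  then show "l1*a + l2* c = a'*l1 + b'*l3" "l3*a + l4* c = c'*l1 + d'*l3"
        "l1*b + l2*d = a'*l2 + b'*l4" "l3*b + l4*d = c'*l2 + d'*l4" using assms(2-4) by (auto simp: algebra_simps)
qed

lemma intertw_trdt:
  assumes "\<forall>v. ap L (ap M v) = ap M' (ap L v)" "mdt L \<noteq> 0"
  shows "mtr M' = mtr M \<and> mdt M' = mdt M"
proof -
  obtain l1 l2 l3 l4 where L: "L = (l1,l2,l3,l4)" by (cases L) auto
  obtain a b c d where M: "M = (a,b,c,d)" by (cases M) auto
  obtain a' b' c' d' where M': "M' = (a',b',c',d')" by (cases M') auto
  note E = intertw_eqs[OF assms(1) L M M']
  have i1: "(l1*l4 - l2*l3) * (a + d) = l4*(l1*a + l2* c) - l2*(l3*a + l4* c) - l3*(l1*b + l2*d) + l1*(l3*b + l4*d)"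
    by (simp add: algebra_simps)
  have i2: "(l1*l4 - l2*l3) * (a' + d') = l4*(a'*l1 + b'*l3) - l2*(c'*l1 + d'*l3) - l3*(a'*l2 + b'*l4) + l1*(c'*l2 + d'*l4)"
    by (simp add: algebra_simps)
  have i3: "(l1*l4 - l2*l3) * (a*d - b* c) = (l1*a + l2* c)*(l3*b + l4*d) - (l1*b + l2*d)*(l3*a + l4* c)"
    by (simp add: algebra_simps)
  have i4: "(l1*l4 - l2*l3) * (a'*d' - b'* c') = (a'*l1 + b'*l3)*(c'*l2 + d'*l4) - (a'*l2 + b'*l4)*(c'*l1 + d'*l3)"
    by (simp add: algebra_simps)
  have "(l1*l4 - l2*l3) * (a' + d') = (l1*l4 - l2*l3) * (a + d)" unfolding i1 i2 E ..
  moreover have "(l1*l4 - l2*l3) * (a'*d' - b'* c') = (l1*l4 - l2*l3) * (a*d - b* c)" unfolding i3 i4 E ..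
  ultimately show ?thesis using assms(2) L M M' by auto
qed

lemma dt_prod:
  assumes "\<forall>v. ap B (ap C v) = (k * fst v, k * snd v)"
  shows "mdt B * mdt C = k * k"
proof -
  obtain l1 l2 l3 l4 where L: "B = (l1,l2,l3,l4)" by (cases B) auto
  obtain a b c d where M: "C = (a,b,c,d)" by (cases C) auto
  have "ap B (ap C (1,0)) = (k, 0)" "ap B (ap C (0,1)) = (0, k)" using assms by auto
  then have h: "l1*a + l2* c = k" "l3*a + l4* c = 0" "l1*b + l2*d = 0" "l3*b + l4*d = k" using L M by auto
  have "(l1*l4 - l2*l3) * (a*d - b* c) = (l1*a + l2* c)*(l3*b + l4*d) - (l1*b + l2*d)*(l3*a + l4* c)"
    by (simp add: algebra_simps)
  also have "\<dots> = k * k" by (simp only: h mult_zero_left mult_zero_right diff_0_right)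
  finally have "(l1*l4 - l2*l3) * (a*d - b* c) = k * k" .
  then show ?thesis using L M by simp
qed

lemma nonscalar_QQ: "\<not> scalar M \<Longrightarrow> \<exists>u. QQ M u \<noteq> 0"
proof -
  assume ns: "\<not> scalar M"
  obtain a b c d where M: "M = (a,b,c,d)" by (cases M) auto
  have "QQ M (1,0) = c" "QQ M (0,1) = -b" "QQ M (1,1) = c + d - a - b" unfolding QQ_def M by auto
  moreover have "c \<noteq> 0 \<or> b \<noteq> 0 \<or> a \<noteq> d" using ns M unfolding scalar_def by auto
  ultimately show ?thesis
  proof (elim disjE)
    assume "c \<noteq> 0" then show ?thesis using \<open>QQ M (1,0) = c\<close> by blast
  next
    assume "b \<noteq> 0" then show ?thesis using \<open>QQ M (0,1) = -b\<close> by (intro exI[of _ "(0,1)"]) simp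
  next
    assume "a \<noteq> d"
    show ?thesis
    proof (cases "c = 0 \<and> b = 0")
      case True then show ?thesis using \<open>a \<noteq> d\<close> \<open>QQ M (1,1) = c + d - a - b\<close> by (intro exI[of _ "(1,1)"]) simp
    next
      case False then show ?thesis using \<open>QQ M (1,0) = c\<close> \<open>QQ M (0,1) = -b\<close> by (metis neg_equal_0_iff_equal)
    qed
  qed
qed

lemma QQ_intertw:
  assumes "ap L (ap M u) = ap M' (ap L u)"
  shows "QQ M' (ap L u) = mdt L * QQ M u"
proof -
  have "QQ M' (ap L u) = fst (ap L u) * snd (ap L (ap M u)) - snd (ap L u) * fst (ap L (ap M u))"
    unfolding QQ_def using assms by simp
  also have "\<dots> = mdt L * QQ M u" unfolding QQ_def
    by (cases L, cases M, cases u) (simp add: algebra_simps)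
  finally show ?thesis .
qed

lemma finite_unif:
  assumes "finite XV" "\<forall>x\<in>XV. \<exists>B::int. P x B" "\<And>x B B'. P x B \<Longrightarrow> B \<le> B' \<Longrightarrow> P x B'"
  shows "\<exists>B. \<forall>x\<in>XV. P x B"
  using assms(1,2)
proof (induction XV rule: finite_induct)
  case empty then show ?case by simp
next
  case (insert x F)
  then obtain B1 where B1: "\<forall>y\<in>F. P y B1" by auto
  obtain B2 where B2: "P x B2" using insert by auto
  show ?case using B1 B2 assms(3)[of _ B1 "max B1 B2"] assms(3)[of x B2 "max B1 B2"]
    by (intro exI[of _ "max B1 B2"]) auto
qed

lemma ap_bound:
  assumes "\<bar>fst w\<bar> \<le> B" "\<bar>snd w\<bar> \<le> B"
  shows "\<bar>fst (ap M w)\<bar> \<le> (\<bar>fst M\<bar> + \<bar>fst (snd M)\<bar> + \<bar>fst (snd (snd M))\<bar> + \<bar>snd (snd (snd M))\<bar>) * B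
       \<and> \<bar>snd (ap M w)\<bar> \<le> (\<bar>fst M\<bar> + \<bar>fst (snd M)\<bar> + \<bar>fst (snd (snd M))\<bar> + \<bar>snd (snd (snd M))\<bar>) * B"
proof -
  obtain a b c d where M: "M = (a,b,c,d)" by (cases M) auto
  obtain x y where w: "w = (x,y)" by (cases w) auto
  have B0: "B \<ge> 0" using assms by linarith
  have ax: "\<bar>a*x\<bar> \<le> \<bar>a\<bar>*B" "\<bar>b*y\<bar> \<le> \<bar>b\<bar>*B" "\<bar>c*x\<bar> \<le> \<bar>c\<bar>*B" "\<bar>d*y\<bar> \<le> \<bar>d\<bar>*B"
    using assms w by (auto simp: abs_mult intro: mult_left_mono)
  have "\<bar>a*x + b*y\<bar> \<le> (\<bar>a\<bar> + \<bar>b\<bar> + \<bar>c\<bar> + \<bar>d\<bar>) * B"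
    using ax abs_triangle_ineq[of "a*x" "b*y"] B0 by (simp add: algebra_simps) (smt (verit) mult_nonneg_nonneg abs_ge_zero)
  moreover have "\<bar>c*x + d*y\<bar> \<le> (\<bar>a\<bar> + \<bar>b\<bar> + \<bar>c\<bar> + \<bar>d\<bar>) * B"
    using ax abs_triangle_ineq[of "c*x" "d*y"] B0 by (simp add: algebra_simps) (smt (verit) mult_nonneg_nonneg abs_ge_zero)
  ultimately show ?thesis using M w by simp
qed

lemma fin_L:
  assumes H: "finite H" and g: "goodm M" and ns: "\<not> scalar M"
  shows "finite {L. \<exists>M'\<in>H. (\<forall>v. ap L (ap M v) = ap M' (ap L v)) \<and> mdt L \<noteq> 0 \<and> \<bar>mdt L\<bar> \<le> K}"
    (is "finite ?LL")
proof -
  obtain u where u: "QQ M u \<noteq> 0" using nonscalar_QQ[OF ns] by blast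
  define K' where "K' = \<bar>K * QQ M u\<bar>"
  define P where "P = (\<lambda>M' B. \<forall>w. QQ M' w \<noteq> 0 \<and> \<bar>QQ M' w\<bar> \<le> K' \<longrightarrow>
        \<bar>fst w\<bar> \<le> B \<and> \<bar>snd w\<bar> \<le> B \<and> \<bar>fst (ap M' w)\<bar> \<le> B \<and> \<bar>snd (ap M' w)\<bar> \<le> B)"
  have "\<exists>B. \<forall>M'\<in>{M'\<in>H. goodm M'}. P M' B"
  proof (rule finite_unif)
    show "finite {M'\<in>H. goodm M'}" using H by simp
    show "\<And>x B B'. P x B \<Longrightarrow> B \<le> B' \<Longrightarrow> P x B'" unfolding P_def by fastforce
    show "\<forall>M'\<in>{M'\<in>H. goodm M'}. \<exists>B. P M' B"
    proof
      fix M' assume "M' \<in> {M'\<in>H. goodm M'}"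
      then obtain B0 where B0: "\<forall>w. QQ M' w \<noteq> 0 \<and> \<bar>QQ M' w\<bar> \<le> K' \<longrightarrow> \<bar>fst w\<bar> \<le> B0 \<and> \<bar>snd w\<bar> \<le> B0"
        using bound_good by blast
      define C where "C = \<bar>fst M'\<bar> + \<bar>fst (snd M')\<bar> + \<bar>fst (snd (snd M'))\<bar> + \<bar>snd (snd (snd M'))\<bar>"
      show "\<exists>B. P M' B"
      proof (intro exI[of _ "\<bar>B0\<bar> + C * \<bar>B0\<bar>"])
        show "P M' (\<bar>B0\<bar> + C * \<bar>B0\<bar>)" unfolding P_def
        proof (intro allI impI)
          fix w assume w: "QQ M' w \<noteq> 0 \<and> \<bar>QQ M' w\<bar> \<le> K'"
          then have "\<bar>fst w\<bar> \<le> B0 \<and> \<bar>snd w\<bar> \<le> B0" using B0 by blast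
          then have b: "\<bar>fst w\<bar> \<le> \<bar>B0\<bar>" "\<bar>snd w\<bar> \<le> \<bar>B0\<bar>" by linarith+
          have C0: "C \<ge> 0" unfolding C_def by simp
          have "C * \<bar>B0\<bar> \<ge> 0" using C0 by simp
          then show "\<bar>fst w\<bar> \<le> \<bar>B0\<bar> + C * \<bar>B0\<bar> \<and> \<bar>snd w\<bar> \<le> \<bar>B0\<bar> + C * \<bar>B0\<bar> \<and>
             \<bar>fst (ap M' w)\<bar> \<le> \<bar>B0\<bar> + C * \<bar>B0\<bar> \<and> \<bar>snd (ap M' w)\<bar> \<le> \<bar>B0\<bar> + C * \<bar>B0\<bar>"
            using b ap_bound[OF b, of M'] unfolding C_def by linarith
        qed
      qed
    qed
  qed
  then obtain B where B: "\<forall>M'\<in>{M'\<in>H. goodm M'}. P M' B" by blast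
  define f where "f = (\<lambda>L. (ap L u, ap L (ap M u)))"
  have inj: "inj_on f ?LL"
  proof (rule inj_onI)
    fix L1 L2 assume "f L1 = f L2"
    then have e: "ap L1 u = ap L2 u" "ap L1 (ap M u) = ap L2 (ap M u)" unfolding f_def by auto
    obtain l1 l2 l3 l4 where L1: "L1 = (l1,l2,l3,l4)" by (cases L1) auto
    obtain m1 m2 m3 m4 where L2: "L2 = (m1,m2,m3,m4)" by (cases L2) auto
    obtain u1 u2 where uu: "u = (u1,u2)" by (cases u) auto
    obtain v1 v2 where vv: "ap M u = (v1,v2)" by (cases "ap M u") auto
    have D: "u1*v2 - u2*v1 \<noteq> 0" using u unfolding QQ_def uu vv[unfolded uu] by simp
    have eqs: "l1*u1 + l2*u2 = m1*u1 + m2*u2" "l3*u1 + l4*u2 = m3*u1 + m4*u2"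
       "l1*v1 + l2*v2 = m1*v1 + m2*v2" "l3*v1 + l4*v2 = m3*v1 + m4*v2"
      using e unfolding L1 L2 uu vv[unfolded uu] by (auto simp: vv[unfolded uu])
    have "(l1 - m1) * (u1*v2 - u2*v1) = 0" "(l2 - m2) * (u1*v2 - u2*v1) = 0"
         "(l3 - m3) * (u1*v2 - u2*v1) = 0" "(l4 - m4) * (u1*v2 - u2*v1) = 0"
    proof -
      have j1: "(l1 - m1) * (u1*v2 - u2*v1) = v2*((l1*u1 + l2*u2) - (m1*u1 + m2*u2)) - u2*((l1*v1 + l2*v2) - (m1*v1 + m2*v2))" by (simp add: algebra_simps)
      have j2: "(l2 - m2) * (u1*v2 - u2*v1) = u1*((l1*v1 + l2*v2) - (m1*v1 + m2*v2)) - v1*((l1*u1 + l2*u2) - (m1*u1 + m2*u2))" by (simp add: algebra_simps)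
      have j3: "(l3 - m3) * (u1*v2 - u2*v1) = v2*((l3*u1 + l4*u2) - (m3*u1 + m4*u2)) - u2*((l3*v1 + l4*v2) - (m3*v1 + m4*v2))" by (simp add: algebra_simps)
      have j4: "(l4 - m4) * (u1*v2 - u2*v1) = u1*((l3*v1 + l4*v2) - (m3*v1 + m4*v2)) - v1*((l3*u1 + l4*u2) - (m3*u1 + m4*u2))" by (simp add: algebra_simps)
      show "(l1 - m1) * (u1*v2 - u2*v1) = 0" "(l2 - m2) * (u1*v2 - u2*v1) = 0"
         "(l3 - m3) * (u1*v2 - u2*v1) = 0" "(l4 - m4) * (u1*v2 - u2*v1) = 0"
        unfolding j1 j2 j3 j4 eqs by simp_all
    qed
    then show "L1 = L2" using D L1 L2 by auto
  qed
  have sub: "f ` ?LL \<subseteq> ({-B..B} \<times> {-B..B}) \<times> ({-B..B} \<times> {-B..B})"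
  proof
    fix z assume "z \<in> f ` ?LL"
    then obtain L M' where L: "z = f L" "M' \<in> H" "\<forall>v. ap L (ap M v) = ap M' (ap L v)" "mdt L \<noteq> 0" "\<bar>mdt L\<bar> \<le> K"
      by blast
    have td: "mtr M' = mtr M \<and> mdt M' = mdt M" using intertw_trdt L(3,4) by blast
    have gM': "goodm M'" using g td unfolding goodm_def by simp
    have q: "QQ M' (ap L u) = mdt L * QQ M u" using QQ_intertw L(3) by blast
    have q1: "QQ M' (ap L u) \<noteq> 0" using q u L(4) by simp
    have "\<bar>QQ M' (ap L u)\<bar> = \<bar>mdt L\<bar> * \<bar>QQ M u\<bar>" using q by (simp add: abs_mult)
    also have "\<dots> \<le> \<bar>K\<bar> * \<bar>QQ M u\<bar>" using L(5) by (intro mult_right_mono) auto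
    finally have q2: "\<bar>QQ M' (ap L u)\<bar> \<le> K'" unfolding K'_def by (simp add: abs_mult)
    have "P M' B" using B L(2) gM' by blast
    then have bb: "\<bar>fst (ap L u)\<bar> \<le> B \<and> \<bar>snd (ap L u)\<bar> \<le> B \<and> \<bar>fst (ap M' (ap L u))\<bar> \<le> B \<and> \<bar>snd (ap M' (ap L u))\<bar> \<le> B"
      unfolding P_def using q1 q2 by blast
    have "ap L (ap M u) = ap M' (ap L u)" using L(3) by blast
    then have "f L = (ap L u, ap M' (ap L u))" unfolding f_def by simp
    then show "z \<in> ({-B..B} \<times> {-B..B}) \<times> ({-B..B} \<times> {-B..B})" using L(1) bb
      by (auto simp: mem_Times_iff abs_le_iff)
  qed
  have "finite (f ` ?LL)" using sub by (rule finite_subset) auto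
  then show ?thesis using inj finite_imageD by blast
qed

locale vz2 = group G for G (structure) +
  fixes A :: "'a set" and psi :: "int \<Rightarrow> int \<Rightarrow> 'a"
  assumes nrm: "A \<lhd> G" and finA: "finite (rcosets A)"
  and psi_in: "psi x y \<in> A"
  and psi_add: "psi (x+x') (y+y') = psi x y \<otimes> psi x' y'"
  and psi_inj: "psi x y = psi x' y' \<Longrightarrow> x = x' \<and> y = y'"
  and psi_surj: "a \<in> A \<Longrightarrow> \<exists>x y. a = psi x y"
begin

definition co :: "'a \<Rightarrow> int \<times> int" where
  "co a = (SOME p. a = psi (fst p) (snd p))"

definition NN :: nat where "NN = card (rcosets A)"

lemma sg: "subgroup A G" using nrm normal_imp_subgroup by blast
lemma A_sub: "A \<subseteq> carrier G" using sg subgroup.subset by blast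
lemma psi_car[simp]: "psi x y \<in> carrier G" using psi_in A_sub by blast

lemma psi00[simp]: "psi 0 0 = \<one>"
proof -
  have "psi 0 0 \<otimes> psi 0 0 = psi 0 0 \<otimes> \<one>" using psi_add[of 0 0 0 0] by simp
  then show ?thesis using l_cancel[of "psi 0 0" "psi 0 0" \<one>] by simp
qed

lemma psi_neg: "psi (-x) (-y) = inv (psi x y)"
proof -
  have "psi x y \<otimes> psi (-x) (-y) = \<one>" using psi_add[of x "-x" y "-y"] by simp
  have "psi (-x) (-y) \<otimes> psi x y = \<one>" using psi_add[of "-x" x "-y" y] by simp
  then show ?thesis using inv_equality psi_car by metis
qed

lemma psi_comm: "psi x y \<otimes> psi x' y' = psi x' y' \<otimes> psi x y"
  by (metis psi_add add.commute)

lemma co_psi[simp]: "co (psi x y) = (x, y)"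
proof -
  have "\<exists>p. psi x y = psi (fst p) (snd p)" by (rule exI[of _ "(x,y)"]) simp
  then have "psi x y = psi (fst (co (psi x y))) (snd (co (psi x y)))"
    unfolding co_def by (rule someI_ex)
  then show ?thesis using psi_inj by (metis prod.collapse)
qed

lemma psi_co: "a \<in> A \<Longrightarrow> psi (fst (co a)) (snd (co a)) = a"
proof -
  assume "a \<in> A" then obtain x y where "a = psi x y" using psi_surj by blast
  then show ?thesis by simp
qed

lemma A_comm: "a \<in> A \<Longrightarrow> b \<in> A \<Longrightarrow> a \<otimes> b = b \<otimes> a"
proof -
  assume "a \<in> A" "b \<in> A"
  then obtain x y x' y' where "a = psi x y" "b = psi x' y'" using psi_surj by meson
  then show ?thesis using psi_comm by simp
qed

lemma psi_pow: "psi x y [^] (n::nat) = psi (int n * x) (int n * y)"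
proof (induction n)
  case 0 then show ?case by simp
next
  case (Suc n)
  have "psi x y [^] Suc n = psi x y [^] n \<otimes> psi x y" by (rule nat_pow_Suc)
  also have "\<dots> = psi (int n * x) (int n * y) \<otimes> psi x y" using Suc by simp
  also have "\<dots> = psi (int n * x + x) (int n * y + y)" by (rule psi_add[symmetric])
  also have "int n * x + x = int (Suc n) * x" by (simp add: algebra_simps)
  also have "int n * y + y = int (Suc n) * y" by (simp add: algebra_simps)
  finally show ?case .
qed

lemma psi_ipow: "psi x y [^] (k::int) = psi (k * x) (k * y)"
proof (cases "k < 0")
  case False
  then have "psi x y [^] k = psi x y [^] nat k" by (metis int_pow_def2)
  also have "\<dots> = psi (int (nat k) * x) (int (nat k) * y)" by (rule psi_pow)
  finally show ?thesis using False by simp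
next
  case True
  then have "psi x y [^] k = inv (psi x y [^] nat (-k))" by (metis int_pow_def2)
  also have "\<dots> = inv (psi (int (nat (-k)) * x) (int (nat (-k)) * y))" by (simp only: psi_pow)
  also have "\<dots> = inv (psi (-k * x) (-k * y))" using True by simp
  also have "\<dots> = psi (k * x) (k * y)" using psi_neg[of "-k*x" "-k*y"] by simp
  finally show ?thesis .
qed

lemma co_mult: "a \<in> A \<Longrightarrow> b \<in> A \<Longrightarrow> co (a \<otimes> b) = (fst (co a) + fst (co b), snd (co a) + snd (co b))"
proof -
  assume "a \<in> A" "b \<in> A"
  then obtain x y x' y' where "a = psi x y" "b = psi x' y'" using psi_surj by meson
  then show ?thesis by (simp flip: psi_add)
qed

lemma NN_pos: "NN > 0"
proof -
  have "A #> \<one> \<in> rcosets A" using rcosetsI A_sub by blast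
  then show ?thesis unfolding NN_def using finA card_gt_0_iff by blast
qed

lemma pow_NN: assumes "x \<in> carrier G" shows "x [^] NN \<in> A"
proof -
  interpret FG: group "G Mod A" using nrm normal.factorgroup_is_group by blast
  have xc: "A #> x \<in> carrier (G Mod A)" using assms by (simp add: FactGroup_def rcosetsI A_sub)
  have "order (G Mod A) = NN" unfolding NN_def order_def FactGroup_def by simp
  then have "(A #> x) [^]\<^bsub>G Mod A\<^esub> NN = A" using FG.pow_order_eq_1[OF xc] by simp
  then have "A #> (x [^] NN) = A" using normal.FactGroup_pow[OF nrm assms] by simp
  then show ?thesis using coset_join1 sg assms by blast
qed


definition rep :: "'a set \<Rightarrow> 'a" where "rep C = (if C = A then \<one> else (SOME x. x \<in> C))"
definition TT :: "'a set" where "TT = rep ` (rcosets A)"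

lemma TT_fin: "finite TT" unfolding TT_def using finA by simp

lemma one_TT: "\<one> \<in> TT"
proof -
  have "A #> \<one> \<in> rcosets A" using rcosetsI A_sub by blast
  then have "A \<in> rcosets A" using A_sub by simp
  then show ?thesis unfolding TT_def rep_def by force
qed

lemma rep_in: assumes "C \<in> rcosets A" shows "rep C \<in> C"
proof (cases "C = A")
  case True then show ?thesis unfolding rep_def using sg subgroup.one_closed by auto
next
  case False
  obtain x where x: "x \<in> carrier G" "C = A #> x" using assms unfolding RCOSETS_def by blast
  then have "x \<in> C" using rcos_self sg by blast
  then have "(SOME x. x \<in> C) \<in> C" by (rule someI)
  then show ?thesis unfolding rep_def using False by simp
qed

lemma TT_car: "TT \<subseteq> carrier G"
proof
  fix t assume "t \<in> TT"
  then obtain C where C: "C \<in> rcosets A" "t = rep C" unfolding TT_def by blast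
  obtain x where x: "x \<in> carrier G" "C = A #> x" using C(1) unfolding RCOSETS_def by blast
  have "C \<subseteq> carrier G" using x r_coset_subset_G A_sub by blast
  then show "t \<in> carrier G" using rep_in C by blast
qed

lemma decomp: assumes "g \<in> carrier G" shows "\<exists>a\<in>A. \<exists>t\<in>TT. g = a \<otimes> t"
proof -
  define C where "C = A #> g"
  have C: "C \<in> rcosets A" unfolding C_def using rcosetsI A_sub assms by blast
  define t where "t = rep C"
  have tC: "t \<in> C" using rep_in C t_def by blast
  have tT: "t \<in> TT" unfolding TT_def t_def using C by blast
  have "A #> g = A #> t" using repr_independence tC C_def assms sg by blast
  then have "g \<in> A #> t" using rcos_self assms sg by blast
  then obtain a where "a \<in> A" "g = a \<otimes> t" unfolding r_coset_def by blast
  then show ?thesis using tT by blast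
qed

lemma psi_split: "psi x y = psi 1 0 [^] x \<otimes> psi 0 1 [^] y"
  using psi_add[of x 0 0 y] by (simp add: psi_ipow)

lemma exists_fgs: "\<exists>S. finite_generating_set G S"
proof -
  define S where "S = TT \<union> {psi 1 0, psi 0 1}"
  have Sc: "S \<subseteq> carrier G" unfolding S_def using TT_car by auto
  have "carrier G \<subseteq> generate G S"
  proof
    fix g assume g: "g \<in> carrier G"
    obtain a t where at: "a \<in> A" "t \<in> TT" "g = a \<otimes> t" using decomp[OF g] by blast
    obtain x y where a: "a = psi x y" using psi_surj at(1) by blast
    have sgS: "subgroup (generate G S) G" using generate_is_subgroup Sc by blast
    have i1: "psi 1 0 \<in> generate G S" "psi 0 1 \<in> generate G S" "t \<in> generate G S"
      unfolding S_def using at(2) by (auto intro: generate.incl)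
    have "psi 1 0 [^] x \<in> generate G S" "psi 0 1 [^] y \<in> generate G S"
      using subgroup_int_pow_closed[OF sgS] i1 by auto
    moreover have "a = psi 1 0 [^] x \<otimes> psi 0 1 [^] y" unfolding a by (rule psi_split)
    ultimately have "a \<in> generate G S" using subgroup.m_closed[OF sgS] by simp
    then show "g \<in> generate G S" unfolding at(3) using subgroup.m_closed[OF sgS] i1(3) by blast
  qed
  moreover have "generate G S \<subseteq> carrier G" using generate_incl Sc by blast
  moreover have "finite S" unfolding S_def using TT_fin by simp
  ultimately show ?thesis unfolding finite_generating_set_def using Sc by blast
qed

end

context vz2 begin

lemma finite_box_bound: assumes "finite (Y :: (int \<times> int) set)"
  shows "\<exists>K::nat. \<forall>p\<in>Y. \<bar>fst p\<bar> \<le> int K \<and> \<bar>snd p\<bar> \<le> int K"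
proof -
  have "\<exists>B. \<forall>p\<in>Y. \<bar>fst p\<bar> \<le> B \<and> \<bar>snd p\<bar> \<le> B"
  proof (rule finite_unif[OF assms])
    show "\<forall>p\<in>Y. \<exists>B. \<bar>fst p\<bar> \<le> B \<and> \<bar>snd p\<bar> \<le> B"
    proof
      fix p :: "int \<times> int"
      show "\<exists>B. \<bar>fst p\<bar> \<le> B \<and> \<bar>snd p\<bar> \<le> B" by (rule exI[of _ "max \<bar>fst p\<bar> \<bar>snd p\<bar>"]) simp
    qed
  qed auto
  then obtain B where B: "\<forall>p\<in>Y. \<bar>fst p\<bar> \<le> B \<and> \<bar>snd p\<bar> \<le> B" by blast
  show ?thesis by (rule exI[of _ "nat B"]) (use B in force)
qed

lemma ub: assumes fgs: "finite_generating_set G S"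
  shows "growth_le (aut_growth G S) (\<lambda>n. n^2)"
proof -
  have Sc: "S \<subseteq> carrier G" and Sf: "finite S" using fgs unfolding finite_generating_set_def by auto
  define S' where "S' = S \<union> (\<lambda>s. inv s) ` S"
  have S'c: "S' \<subseteq> carrier G" unfolding S'_def using Sc by auto
  have S'f: "finite S'" unfolding S'_def using Sf by simp
  have "\<forall>ts \<in> TT \<times> S'. \<exists>p. fst p \<in> A \<and> snd p \<in> TT \<and> fst ts \<otimes> snd ts = fst p \<otimes> snd p"
  proof
    fix ts assume ts: "ts \<in> TT \<times> S'"
    then have "fst ts \<otimes> snd ts \<in> carrier G" using TT_car S'c by (auto simp: mem_Times_iff)
    then obtain a t where "a \<in> A" "t \<in> TT" "fst ts \<otimes> snd ts = a \<otimes> t" using decomp by blast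
    then show "\<exists>p. fst p \<in> A \<and> snd p \<in> TT \<and> fst ts \<otimes> snd ts = fst p \<otimes> snd p"
      by (intro exI[of _ "(a,t)"]) auto
  qed
  then obtain F where F: "\<forall>ts \<in> TT \<times> S'. fst (F ts) \<in> A \<and> snd (F ts) \<in> TT \<and> fst ts \<otimes> snd ts = fst (F ts) \<otimes> snd (F ts)"
    by metis
  define XX where "XX = (\<lambda>ts. co (fst (F ts))) ` (TT \<times> S')"
  have "finite XX" unfolding XX_def using TT_fin S'f by simp
  then obtain K :: nat where K: "\<forall>p\<in>XX. \<bar>fst p\<bar> \<le> int K \<and> \<bar>snd p\<bar> \<le> int K"
    using finite_box_bound by blast
  have claim: "set xs \<subseteq> S' \<Longrightarrow> t \<in> TT \<Longrightarrow> \<exists>x y t'. t \<otimes> foldr (\<lambda>x y. x \<otimes> y) xs \<one> = psi x y \<otimes> t' \<and> t' \<in> TT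
      \<and> \<bar>x\<bar> \<le> int (K * length xs) \<and> \<bar>y\<bar> \<le> int (K * length xs)" for xs t
  proof (induction xs arbitrary: t)
    case Nil
    then have "t \<otimes> \<one> = psi 0 0 \<otimes> t" using TT_car by auto
    then show ?case using Nil by fastforce
  next
    case (Cons s xs)
    have s: "s \<in> S'" and xsS: "set xs \<subseteq> S'" using Cons.prems by auto
    have ts: "(t, s) \<in> TT \<times> S'" using s Cons.prems by simp
    define b where "b = fst (F (t,s))"
    define t1 where "t1 = snd (F (t,s))"
    have bA: "b \<in> A" and t1T: "t1 \<in> TT" and eq: "t \<otimes> s = b \<otimes> t1" using F ts unfolding b_def t1_def by auto
    obtain x y t' where IH: "t1 \<otimes> foldr (\<lambda>x y. x \<otimes> y) xs \<one> = psi x y \<otimes> t'" "t' \<in> TT"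
      "\<bar>x\<bar> \<le> int (K * length xs)" "\<bar>y\<bar> \<le> int (K * length xs)" using Cons.IH[OF xsS t1T] by blast
    define x0 where "x0 = fst (co b)"
    define y0 where "y0 = snd (co b)"
    have b: "b = psi x0 y0" unfolding x0_def y0_def using psi_co bA by simp
    have "co b \<in> XX" unfolding XX_def b_def using ts by blast
    then have bx: "\<bar>x0\<bar> \<le> int K" "\<bar>y0\<bar> \<le> int K" using K unfolding x0_def y0_def by auto
    have wc: "foldr (\<lambda>x y. x \<otimes> y) xs \<one> \<in> carrier G" using xsS S'c foldr_closed by blast
    have tc: "t \<in> carrier G" "t1 \<in> carrier G" "t' \<in> carrier G" "s \<in> carrier G"
      using TT_car Cons.prems t1T IH(2) s S'c by auto
    have "t \<otimes> foldr (\<lambda>x y. x \<otimes> y) (s # xs) \<one> = (t \<otimes> s) \<otimes> foldr (\<lambda>x y. x \<otimes> y) xs \<one>"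
      using tc wc by (simp add: m_assoc)
    also have "\<dots> = b \<otimes> (t1 \<otimes> foldr (\<lambda>x y. x \<otimes> y) xs \<one>)" using eq tc wc b by (simp add: m_assoc)
    also have "\<dots> = (psi x0 y0 \<otimes> psi x y) \<otimes> t'" using IH(1) tc b by (simp add: m_assoc)
    also have "\<dots> = psi (x0 + x) (y0 + y) \<otimes> t'" by (simp add: psi_add)
    finally have e: "t \<otimes> foldr (\<lambda>x y. x \<otimes> y) (s # xs) \<one> = psi (x0 + x) (y0 + y) \<otimes> t'" .
    have "\<bar>x0 + x\<bar> \<le> int (K * length (s # xs))" "\<bar>y0 + y\<bar> \<le> int (K * length (s # xs))"
      using bx IH(3,4) by (simp_all add: algebra_simps)
    then show ?case using e IH(2) by blast
  qed
  define box where "box = (\<lambda>m::nat. {- int m..int m})"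
  have wbsub: "word_ball G S n \<subseteq> (\<lambda>(x,y,t). psi x y \<otimes> t) ` (box (K*n) \<times> box (K*n) \<times> TT)" for n
  proof
    fix w assume "w \<in> word_ball G S n"
    then obtain xs where xs: "w = foldr (\<lambda>x y. x \<otimes> y) xs \<one>" "length xs \<le> n" "set xs \<subseteq> S'"
      unfolding word_ball_def S'_def by blast
    obtain x y t' where c: "\<one> \<otimes> w = psi x y \<otimes> t'" "t' \<in> TT" "\<bar>x\<bar> \<le> int (K * length xs)" "\<bar>y\<bar> \<le> int (K * length xs)"
      using claim[OF xs(3) one_TT] xs(1) by blast
    have "w \<in> carrier G" using xs(1,3) S'c foldr_closed by blast
    then have "w = psi x y \<otimes> t'" using c(1) by simp
    moreover have "int (K * length xs) \<le> int (K * n)" using xs(2) by (simp add: mult_left_mono)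
    ultimately show "w \<in> (\<lambda>(x,y,t). psi x y \<otimes> t) ` (box (K*n) \<times> box (K*n) \<times> TT)"
      using c unfolding box_def by (intro image_eqI[of _ _ "(x,y,t')"]) auto
  qed
  have cardb: "card (box m) = 2*m+1" for m unfolding box_def by simp
  define c where "c = 2*K + 1 + card TT"
  have "aut_growth G S n \<le> c * (c * n + c)^2 + c" for n
  proof -
    have "aut_growth G S n \<le> card (word_ball G S n)"
      unfolding aut_growth_def using wb_fin[OF Sf] card_image_le by blast
    also have "\<dots> \<le> card ((\<lambda>(x,y,t). psi x y \<otimes> t) ` (box (K*n) \<times> box (K*n) \<times> TT))"
      using wbsub TT_fin unfolding box_def by (intro card_mono) auto
    also have "\<dots> \<le> card (box (K*n) \<times> box (K*n) \<times> TT)" by (rule card_image_le) (use TT_fin box_def in simp)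
    also have "\<dots> = (2*(K*n)+1) * (2*(K*n)+1) * card TT" by (simp only: card_cartesian_product cardb mult.assoc)
    also have "\<dots> \<le> (c * n + c) * (c * n + c) * c"
    proof -
      have "2*(K*n)+1 \<le> c * n + c" unfolding c_def by (simp add: algebra_simps)
      moreover have "card TT \<le> c" unfolding c_def by simp
      ultimately show ?thesis by (intro mult_mono) auto
    qed
    also have "\<dots> \<le> c * (c * n + c)^2 + c" by (simp add: power2_eq_square)
    finally show ?thesis .
  qed
  moreover have "c \<noteq> 0" unfolding c_def by simp
  ultimately show ?thesis unfolding growth_le_def by blast
qed

end

definition addv :: "(int \<Rightarrow> int \<Rightarrow> int \<times> int) \<Rightarrow> bool" where
  "addv f \<longleftrightarrow> (\<forall>x y x' y'. f (x+x') (y+y') = (fst (f x y) + fst (f x' y'), snd (f x y) + snd (f x' y')))"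

definition matof :: "(int \<Rightarrow> int \<Rightarrow> int \<times> int) \<Rightarrow> m2" where
  "matof f = (fst (f 1 0), fst (f 0 1), snd (f 1 0), snd (f 0 1))"

lemma add_lin1:
  fixes h :: "int \<Rightarrow> int"
  assumes "\<And>x x'. h (x + x') = h x + h x'"
  shows "h x = x * h 1"
proof -
  have h0: "h 0 = 0" using assms[of 0 0] by simp
  have nat: "h (int n) = int n * h 1" for n
  proof (induction n)
    case 0 then show ?case using h0 by simp
  next
    case (Suc n)
    have "h (int (Suc n)) = h (int n + 1)" by (simp add: add.commute)
    also have "\<dots> = h (int n) + h 1" by (rule assms)
    finally show ?case using Suc by (simp add: algebra_simps)
  qed
  have neg: "h (- z) = - h z" for z using assms[of z "-z"] h0 by simp
  show ?thesis
  proof (cases "x \<ge> 0")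
    case True
    then show ?thesis using nat[of "nat x"] by simp
  next
    case False
    then have "h x = - h (int (nat (-x)))" using neg[of "int (nat (-x))"] by simp
    then show ?thesis using nat[of "nat (-x)"] False by simp
  qed
qed

lemma addv_ap: assumes "addv f" shows "f x y = ap (matof f) (x,y)"
proof -
  have s: "f x y = (fst (f x 0) + fst (f 0 y), snd (f x 0) + snd (f 0 y))"
    using assms unfolding addv_def by (metis add.right_neutral add_0)
  have a1: "fst (f x 0) = x * fst (f 1 0)"
    by (rule add_lin1[of "\<lambda>x. fst (f x 0)"]) (use assms in \<open>simp add: addv_def, metis add_0 prod.sel(1)\<close>)
  have a2: "snd (f x 0) = x * snd (f 1 0)"
    by (rule add_lin1[of "\<lambda>x. snd (f x 0)"]) (use assms in \<open>simp add: addv_def, metis add_0 prod.sel(2)\<close>)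
  have a3: "fst (f 0 y) = y * fst (f 0 1)"
    by (rule add_lin1[of "\<lambda>y. fst (f 0 y)"]) (use assms in \<open>simp add: addv_def, metis add_0 prod.sel(1)\<close>)
  have a4: "snd (f 0 y) = y * snd (f 0 1)"
    by (rule add_lin1[of "\<lambda>y. snd (f 0 y)"]) (use assms in \<open>simp add: addv_def, metis add_0 prod.sel(2)\<close>)
  show ?thesis using s a1 a2 a3 a4 unfolding matof_def by (simp add: algebra_simps)
qed

lemma ap_ext: "(\<And>v. ap M v = ap M' v) \<Longrightarrow> M = M'"
proof -
  assume h: "\<And>v. ap M v = ap M' v"
  obtain a b c d where M: "M = (a,b,c,d)" by (cases M) auto
  obtain a' b' c' d' where M': "M' = (a',b',c',d')" by (cases M') auto
  show ?thesis using h[of "(1,0)"] h[of "(0,1)"] M M' by simp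
qed

context vz2 begin

definition actf :: "'a \<Rightarrow> int \<Rightarrow> int \<Rightarrow> int \<times> int" where
  "actf h x y = co (inv h \<otimes> psi x y \<otimes> h)"

definition act :: "'a \<Rightarrow> m2" where "act h = matof (actf h)"

lemma cancel_l1: "h \<in> carrier G \<Longrightarrow> z \<in> carrier G \<Longrightarrow> h \<otimes> (inv h \<otimes> z) = z"
  by (simp add: m_assoc[symmetric])
lemma cancel_l2: "h \<in> carrier G \<Longrightarrow> z \<in> carrier G \<Longrightarrow> inv h \<otimes> (h \<otimes> z) = z"
  by (simp add: m_assoc[symmetric])

lemma conj_in: "h \<in> carrier G \<Longrightarrow> a \<in> A \<Longrightarrow> inv h \<otimes> a \<otimes> h \<in> A"
  using normal.inv_op_closed1[OF nrm] by blast

lemma conj_mult: "h \<in> carrier G \<Longrightarrow> a \<in> carrier G \<Longrightarrow> b \<in> carrier G \<Longrightarrow>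
   inv h \<otimes> (a \<otimes> b) \<otimes> h = (inv h \<otimes> a \<otimes> h) \<otimes> (inv h \<otimes> b \<otimes> h)"
proof -
  assume c: "h \<in> carrier G" "a \<in> carrier G" "b \<in> carrier G"
  have "(inv h \<otimes> a \<otimes> h) \<otimes> (inv h \<otimes> b \<otimes> h) = inv h \<otimes> a \<otimes> (h \<otimes> inv h) \<otimes> b \<otimes> h"
    using c by (simp only: m_assoc m_closed inv_closed)
  also have "\<dots> = inv h \<otimes> a \<otimes> b \<otimes> h" using c by (simp only: r_inv r_one m_closed inv_closed)
  also have "\<dots> = inv h \<otimes> (a \<otimes> b) \<otimes> h" using c by (simp add: m_assoc)
  finally show ?thesis by simp
qed

lemma addv_act: assumes "h \<in> carrier G" shows "addv (actf h)"
  unfolding addv_def actf_def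
proof (intro allI)
  fix x y x' y'
  have e: "inv h \<otimes> psi (x + x') (y + y') \<otimes> h = (inv h \<otimes> psi x y \<otimes> h) \<otimes> (inv h \<otimes> psi x' y' \<otimes> h)"
    unfolding psi_add[of x x' y y'] by (rule conj_mult[OF assms psi_car psi_car])
  show "co (inv h \<otimes> psi (x + x') (y + y') \<otimes> h) =
       (fst (co (inv h \<otimes> psi x y \<otimes> h)) + fst (co (inv h \<otimes> psi x' y' \<otimes> h)),
        snd (co (inv h \<otimes> psi x y \<otimes> h)) + snd (co (inv h \<otimes> psi x' y' \<otimes> h)))"
    unfolding e by (rule co_mult[OF conj_in[OF assms psi_in] conj_in[OF assms psi_in]])
qed

lemma act_ap: assumes "h \<in> carrier G" shows "co (inv h \<otimes> psi x y \<otimes> h) = ap (act h) (x,y)"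
proof -
  have "actf h x y = ap (matof (actf h)) (x,y)" by (rule addv_ap[OF addv_act[OF assms]])
  then show ?thesis unfolding act_def by (simp only: actf_def)
qed

lemma conj_psi: assumes "h \<in> carrier G"
  shows "inv h \<otimes> psi x y \<otimes> h = psi (fst (ap (act h) (x,y))) (snd (ap (act h) (x,y)))"
  using psi_co[OF conj_in[OF assms psi_in]] act_ap[OF assms] by simp

lemma act_mult: assumes "h1 \<in> carrier G" "h2 \<in> carrier G"
  shows "ap (act (h1 \<otimes> h2)) v = ap (act h2) (ap (act h1) v)"
proof -
  obtain x y where v: "v = (x,y)" by (cases v) auto
  have "inv (h1 \<otimes> h2) \<otimes> psi x y \<otimes> (h1 \<otimes> h2) = inv h2 \<otimes> (inv h1 \<otimes> psi x y \<otimes> h1) \<otimes> h2"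
    using assms by (simp add: inv_mult_group m_assoc)
  also have "\<dots> = inv h2 \<otimes> psi (fst (ap (act h1) (x,y))) (snd (ap (act h1) (x,y))) \<otimes> h2"
    using conj_psi assms by simp
  finally show ?thesis using act_ap assms v by (metis m_closed prod.collapse)
qed

lemma act_A: assumes "c \<in> A" shows "ap (act c) v = v"
proof -
  obtain x y where v: "v = (x,y)" by (cases v) auto
  have cc: "c \<in> carrier G" using assms A_sub by blast
  have "inv c \<otimes> psi x y \<otimes> c = inv c \<otimes> (c \<otimes> psi x y)" using A_comm[OF psi_in assms] cc by (simp add: m_assoc)
  also have "\<dots> = psi x y" by (rule cancel_l2[OF cc psi_car])
  finally have "inv c \<otimes> psi x y \<otimes> c = psi x y" .
  then show ?thesis using act_ap[OF cc, of x y] v by simp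
qed

lemma act_pow: assumes "h \<in> carrier G" shows "(ap (act h) ^^ k) v = ap (act (h [^] k)) v"
proof (induction k arbitrary: v)
  case 0
  have "\<one> \<in> A" using sg subgroup.one_closed by blast
  then show ?case using act_A by simp
next
  case (Suc k)
  have "(ap (act h) ^^ Suc k) v = ap (act h) ((ap (act h) ^^ k) v)" by simp
  also have "\<dots> = ap (act h) (ap (act (h [^] k)) v)" using Suc by simp
  also have "\<dots> = ap (act (h [^] k \<otimes> h)) v" using act_mult assms by simp
  finally show ?case by simp
qed

lemma act_order: assumes "h \<in> carrier G" shows "(ap (act h) ^^ NN) v = v"
  using act_pow[OF assms] act_A[OF pow_NN[OF assms]] by simp

lemma act_coset: assumes "c \<in> A" "t \<in> carrier G" shows "act (c \<otimes> t) = act t"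
  using act_mult[of c t] act_A[OF assms(1)] assms A_sub by (intro ap_ext) auto

lemma H_fin: "finite (act ` carrier G)"
proof -
  have "act ` carrier G \<subseteq> act ` TT"
  proof
    fix M assume "M \<in> act ` carrier G"
    then obtain h where h: "h \<in> carrier G" "M = act h" by blast
    then obtain c t where "c \<in> A" "t \<in> TT" "h = c \<otimes> t" using decomp by blast
    then show "M \<in> act ` TT" using h act_coset TT_car by auto
  qed
  then show ?thesis using TT_fin finite_subset by blast
qed

end

lemma int_pow_eq1: fixes l :: int assumes "l ^ n = 1" "n > 0" shows "l = 1 \<or> l = -1"
proof -
  have a: "\<bar>l\<bar> ^ n = 1" using assms(1) by (metis abs_one power_abs)
  have "\<bar>l\<bar> \<noteq> 0" using a assms(2) by (metis power_0_left zero_neq_one gr_implies_not0)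
  moreover have "\<not> \<bar>l\<bar> \<ge> 2"
  proof
    assume "\<bar>l\<bar> \<ge> 2"
    then have "\<bar>l\<bar> \<le> \<bar>l\<bar> ^ n" using self_le_power[of "\<bar>l\<bar>" n] assms(2) by simp
    then show False using a \<open>\<bar>l\<bar> \<ge> 2\<close> by simp
  qed
  ultimately have "\<bar>l\<bar> = 1" by linarith
  then show ?thesis by auto
qed

lemma card_fiber:
  assumes "finite B" "\<forall>b\<in>B. card {b'\<in>B. f b' = f b} \<le> D"
  shows "card B \<le> D * card (f ` B)"
proof -
  have "B = (\<Union>y\<in>f ` B. {b\<in>B. f b = y})" by auto
  then have "card B \<le> (\<Sum>y\<in>f ` B. card {b\<in>B. f b = y})"
    using card_UN_le[of "f ` B" "\<lambda>y. {b\<in>B. f b = y}"] assms(1) by simp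
  also have "\<dots> \<le> (\<Sum>y\<in>f ` B. D)"
  proof (rule sum_mono)
    fix y assume "y \<in> f ` B"
    then obtain b where "b \<in> B" "y = f b" by blast
    then show "card {b\<in>B. f b = y} \<le> D" using assms(2) by simp
  qed
  also have "\<dots> = D * card (f ` B)" by simp
  finally show ?thesis .
qed

context vz2 begin

definition Lf :: "('a \<Rightarrow> 'a) \<Rightarrow> int \<Rightarrow> int \<Rightarrow> int \<times> int" where
  "Lf f x y = co (f (psi (int NN * x) (int NN * y)))"

definition Lm :: "('a \<Rightarrow> 'a) \<Rightarrow> m2" where "Lm f = matof (Lf f)"

lemma psiN: "psi (int NN * x) (int NN * y) = psi x y [^] NN" by (simp add: psi_pow)

lemma iso_gh: assumes "f \<in> iso G G" shows "group_hom G G f"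
  using assms is_group unfolding group_hom_def group_hom_axioms_def iso_def by auto

lemma LA: assumes "f \<in> iso G G" shows "f (psi (int NN * x) (int NN * y)) \<in> A"
proof -
  interpret h: group_hom G G f by (rule iso_gh[OF assms])
  have "f (psi (int NN * x) (int NN * y)) = f (psi x y) [^] NN" unfolding psiN by (simp add: h.hom_nat_pow)
  then show ?thesis using pow_NN h.hom_closed psi_car by simp
qed

lemma addv_L: assumes "f \<in> iso G G" shows "addv (Lf f)"
  unfolding addv_def
proof (intro allI)
  fix x y x' y'
  interpret h: group_hom G G f by (rule iso_gh[OF assms])
  have "psi (int NN * (x + x')) (int NN * (y + y')) = psi (int NN * x) (int NN * y) \<otimes> psi (int NN * x') (int NN * y')"
    by (simp add: distrib_left psi_add)
  then have e: "f (psi (int NN * (x + x')) (int NN * (y + y'))) = f (psi (int NN * x) (int NN * y)) \<otimes> f (psi (int NN * x') (int NN * y'))"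
    by simp
  show "Lf f (x + x') (y + y') = (fst (Lf f x y) + fst (Lf f x' y'), snd (Lf f x y) + snd (Lf f x' y'))"
    unfolding Lf_def e by (rule co_mult[OF LA[OF assms] LA[OF assms]])
qed

lemma L_ap: assumes "f \<in> iso G G" shows "Lf f x y = ap (Lm f) (x,y)"
  unfolding Lm_def by (rule addv_ap[OF addv_L[OF assms]])

lemma rel1: assumes "f \<in> iso G G" "a \<in> A" "f a \<in> A"
  shows "ap (Lm f) (co a) = (int NN * fst (co (f a)), int NN * snd (co (f a)))"
proof -
  interpret h: group_hom G G f by (rule iso_gh[OF assms(1)])
  obtain x y where a: "a = psi x y" using psi_surj assms(2) by blast
  obtain x' y' where b: "f a = psi x' y'" using psi_surj assms(3) by blast
  have "ap (Lm f) (co a) = Lf f x y" using L_ap[OF assms(1)] a by simp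
  also have "\<dots> = co (f a [^] NN)" unfolding Lf_def psiN a by (simp add: h.hom_nat_pow)
  also have "\<dots> = co (psi (int NN * x') (int NN * y'))" unfolding b psiN ..
  finally show ?thesis using b by simp
qed

lemma conj_pow: assumes "h \<in> carrier G" "z \<in> carrier G"
  shows "(inv h \<otimes> z \<otimes> h) [^] (n::nat) = inv h \<otimes> z [^] n \<otimes> h"
proof (induction n)
  case 0 then show ?case using assms by (simp add: m_assoc)
next
  case (Suc n)
  have "(inv h \<otimes> z \<otimes> h) [^] Suc n = (inv h \<otimes> z [^] n \<otimes> h) \<otimes> (inv h \<otimes> z \<otimes> h)" using Suc by simp
  also have "\<dots> = inv h \<otimes> (z [^] n \<otimes> z) \<otimes> h" using conj_mult assms by simp
  finally show ?case by simp
qed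

lemma rel2: assumes "f \<in> iso G G" "g \<in> carrier G"
  shows "ap (Lm f) (ap (act g) v) = ap (act (f g)) (ap (Lm f) v)"
proof -
  interpret h: group_hom G G f by (rule iso_gh[OF assms(1)])
  obtain x y where v: "v = (x,y)" by (cases v) auto
  obtain x' y' where v': "ap (act g) (x,y) = (x',y')" by (cases "ap (act g) (x,y)") auto
  have p: "psi x' y' = inv g \<otimes> psi x y \<otimes> g" using conj_psi[OF assms(2), of x y] v' by simp
  obtain u1 u2 where u: "ap (Lm f) (x,y) = (u1,u2)" by (cases "ap (Lm f) (x,y)") auto
  have fu: "f (psi x y [^] NN) = psi u1 u2"
  proof -
    have "co (f (psi x y [^] NN)) = (u1, u2)" using L_ap[OF assms(1), of x y] u unfolding Lf_def psiN by simp
    then show ?thesis using psi_co[OF LA[OF assms(1), of x y, unfolded psiN]] by simp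
  qed
  have "ap (Lm f) (ap (act g) v) = Lf f x' y'" using L_ap[OF assms(1)] v v' by simp
  also have "\<dots> = co (f ((inv g \<otimes> psi x y \<otimes> g) [^] NN))" unfolding Lf_def psiN p ..
  also have "\<dots> = co (f (inv g \<otimes> psi x y [^] NN \<otimes> g))" using conj_pow assms(2) by simp
  also have "\<dots> = co (inv (f g) \<otimes> psi u1 u2 \<otimes> f g)" using assms(2) fu by (simp add: h.hom_mult)
  also have "\<dots> = ap (act (f g)) (u1, u2)" using act_ap h.hom_closed assms(2) by simp
  finally show ?thesis using u v by simp
qed

lemma rel3: assumes "f \<in> iso G G"
  shows "ap (Lm (inv_into (carrier G) f)) (ap (Lm f) v) = (int NN * int NN * fst v, int NN * int NN * snd v)"
proof -
  interpret h: group_hom G G f by (rule iso_gh[OF assms(1)])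
  have f': "inv_into (carrier G) f \<in> iso G G" using iso_set_sym assms by blast
  have inj: "inj_on f (carrier G)" using assms unfolding iso_def bij_betw_def by blast
  obtain x y where v: "v = (x,y)" by (cases v) auto
  obtain u1 u2 where u: "ap (Lm f) (x,y) = (u1,u2)" by (cases "ap (Lm f) (x,y)") auto
  have fu: "f (psi x y [^] NN) = psi u1 u2"
  proof -
    have "co (f (psi x y [^] NN)) = (u1, u2)" using L_ap[OF assms(1), of x y] u unfolding Lf_def psiN by simp
    then show ?thesis using psi_co[OF LA[OF assms(1), of x y, unfolded psiN]] by simp
  qed
  have "ap (Lm (inv_into (carrier G) f)) (u1, u2) = Lf (inv_into (carrier G) f) u1 u2" using L_ap[OF f'] by simp
  also have "\<dots> = co (inv_into (carrier G) f (psi u1 u2 [^] NN))" unfolding Lf_def psiN ..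
  also have "psi u1 u2 [^] NN = f ((psi x y [^] NN) [^] NN)" unfolding fu[symmetric] by (simp add: h.hom_nat_pow)
  also have "inv_into (carrier G) f (f ((psi x y [^] NN) [^] NN)) = (psi x y [^] NN) [^] NN"
    using inj by simp
  also have "(psi x y [^] NN) [^] NN = psi (int NN * (int NN * x)) (int NN * (int NN * y))" by (simp add: psi_pow)
  finally show ?thesis using u v by (simp add: mult.assoc)
qed

lemma dt_L: assumes "f \<in> iso G G" shows "mdt (Lm f) \<noteq> 0 \<and> \<bar>mdt (Lm f)\<bar> \<le> int NN ^ 4"
proof -
  have e: "mdt (Lm (inv_into (carrier G) f)) * mdt (Lm f) = (int NN * int NN) * (int NN * int NN)"
    by (rule dt_prod) (use rel3[OF assms] in simp)
  have N0: "int NN > 0" using NN_pos by simp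
  then have nz: "(int NN * int NN) * (int NN * int NN) \<noteq> 0" by simp
  then have d1: "mdt (Lm f) \<noteq> 0" "mdt (Lm (inv_into (carrier G) f)) \<noteq> 0" using e by auto
  have "\<bar>mdt (Lm f)\<bar> \<le> \<bar>mdt (Lm (inv_into (carrier G) f))\<bar> * \<bar>mdt (Lm f)\<bar>"
    using d1 abs_le_cmul by (simp add: abs_mult[symmetric])
  also have "\<dots> = int NN ^ 4" using e N0 by (simp add: abs_mult[symmetric] power4_eq_xxxx mult.assoc)
  finally show ?thesis using d1 by simp
qed

lemma nonscalar: assumes "g \<in> carrier G" "\<exists>a\<in>A. inv g \<otimes> a \<otimes> g \<noteq> a" "\<exists>a\<in>A. inv g \<otimes> a \<otimes> g \<noteq> inv a"
  shows "\<not> scalar (act g)"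
proof
  assume "scalar (act g)"
  then obtain l where l: "\<forall>v. ap (act g) v = (l * fst v, l * snd v)" using scalar_ap by blast
  have pw: "(ap (act g) ^^ k) v = (l ^ k * fst v, l ^ k * snd v)" for k v
    by (induction k) (auto simp: l algebra_simps)
  have "l ^ NN = 1" using pw[of NN "(1,0)"] act_order[OF assms(1)] by simp
  then have lpm: "l = 1 \<or> l = -1" using int_pow_eq1 NN_pos by blast
  then show False
  proof
    assume l1: "l = 1"
    obtain a where a: "a \<in> A" "inv g \<otimes> a \<otimes> g \<noteq> a" using assms(2) by blast
    obtain x y where "a = psi x y" using psi_surj a(1) by blast
    then show False using a conj_psi[OF assms(1), of x y] l l1 by simp
  next
    assume l1: "l = -1"
    obtain a where a: "a \<in> A" "inv g \<otimes> a \<otimes> g \<noteq> inv a" using assms(3) by blast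
    obtain x y where "a = psi x y" using psi_surj a(1) by blast
    then show False using a conj_psi[OF assms(1), of x y] l l1 psi_neg by simp
  qed
qed

lemma orbit_bound: assumes "g \<in> carrier G" "\<not> scalar (act g)"
  shows "\<exists>D. \<forall>a\<in>A. finite (aut_orbit G a \<inter> A) \<and> card (aut_orbit G a \<inter> A) \<le> D"
proof -
  have gm: "goodm (act g)" using finite_order_good[where M="act g" and N=NN] act_order[OF assms(1)] NN_pos assms(2) by blast
  define LL where "LL = {L. \<exists>M'\<in>act ` carrier G. (\<forall>v. ap L (ap (act g) v) = ap M' (ap L v)) \<and> mdt L \<noteq> 0 \<and> \<bar>mdt L\<bar> \<le> int NN ^ 4}"
  have fin: "finite LL" unfolding LL_def by (rule fin_L[OF H_fin gm assms(2)])
  have "aut_orbit G a \<inter> A \<subseteq> (\<lambda>L. psi (fst (ap L (co a)) div int NN) (snd (ap L (co a)) div int NN)) ` LL"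
    if aA: "a \<in> A" for a
  proof
    fix b assume "b \<in> aut_orbit G a \<inter> A"
    then obtain f where f: "f \<in> iso G G" "b = f a" "b \<in> A" unfolding aut_orbit_def by blast
    interpret h: group_hom G G f by (rule iso_gh[OF f(1)])
    have "f g \<in> carrier G" using assms(1) by simp
    then have "Lm f \<in> LL" unfolding LL_def using rel2[OF f(1) assms(1)] dt_L[OF f(1)] by blast
    moreover have "ap (Lm f) (co a) = (int NN * fst (co b), int NN * snd (co b))" using rel1[OF f(1) aA] f by simp
    moreover have "int NN \<noteq> 0" using NN_pos by simp
    ultimately show "b \<in> (\<lambda>L. psi (fst (ap L (co a)) div int NN) (snd (ap L (co a)) div int NN)) ` LL"
      using psi_co[OF f(3)] by (intro image_eqI[of _ _ "Lm f"]) auto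
  qed
  then have "\<forall>a\<in>A. finite (aut_orbit G a \<inter> A) \<and> card (aut_orbit G a \<inter> A) \<le> card LL"
    using fin by (meson card_image_le finite_imageI finite_subset card_mono order_trans)
  then show ?thesis by blast
qed

end

context vz2 begin

lemma lb: assumes fgs: "finite_generating_set G S"
  and D: "\<forall>a\<in>A. finite (aut_orbit G a \<inter> A) \<and> card (aut_orbit G a \<inter> A) \<le> D"
  shows "growth_le (\<lambda>n. n^2) (aut_growth G S)"
proof -
  have Sc: "S \<subseteq> carrier G" and Sf: "finite S" and gen: "generate G S = carrier G"
    using fgs unfolding finite_generating_set_def by auto
  obtain r1 where r1: "psi 1 0 \<in> word_ball G S r1" using gen_wb[OF Sc] gen psi_car by blast
  obtain r2 where r2: "psi 0 1 \<in> word_ball G S r2" using gen_wb[OF Sc] gen psi_car by blast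
  define r where "r = r1 + r2"
  have e1: "psi 1 0 \<in> word_ball G S r" using r1 wb_mono[of r1 r] unfolding r_def by auto
  have e2: "psi 0 1 \<in> word_ball G S r" using r2 wb_mono[of r2 r] unfolding r_def by auto
  have wbpsi: "psi x y \<in> word_ball G S (r * nat \<bar>x\<bar> + r * nat \<bar>y\<bar>)" for x y
  proof -
    have "psi x y = psi 1 0 [^] x \<otimes> psi 0 1 [^] y" by (rule psi_split)
    then show ?thesis using wb_mult[OF Sc wb_ipow[OF Sc e1] wb_ipow[OF Sc e2]] by simp
  qed
  define c where "c = 2 * r + D + 1"
  have Dc: "D \<le> c" unfolding c_def by simp
  have "n^2 \<le> c * aut_growth G S (c * n + c) + c" for n
  proof -
    define Bn where "Bn = (\<lambda>p. psi (fst p) (snd p)) ` ({- int n..int n} \<times> {- int n..int n})"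
    have injp: "inj_on (\<lambda>p. psi (fst p) (snd p)) ({- int n..int n} \<times> {- int n..int n})"
      using psi_inj by (intro inj_onI) (auto simp: prod_eq_iff)
    have cc: "card {- int n..int n} = 2*n+1" by simp
    have "card Bn = card ({- int n..int n} \<times> {- int n..int n})" unfolding Bn_def by (rule card_image[OF injp])
    also have "\<dots> = card {- int n..int n} * card {- int n..int n}" by (rule card_cartesian_product)
    also have "\<dots> = (2*n+1) * (2*n+1)" unfolding cc ..
    finally have cB: "card Bn = (2*n+1) * (2*n+1)" .
    have fB: "finite Bn" unfolding Bn_def by simp
    have BA: "Bn \<subseteq> A" unfolding Bn_def using psi_in by auto
    have Bwb: "Bn \<subseteq> word_ball G S (c * n + c)"
    proof
      fix b assume "b \<in> Bn"
      then obtain x y where xy: "b = psi x y" "\<bar>x\<bar> \<le> int n" "\<bar>y\<bar> \<le> int n" unfolding Bn_def by auto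
      have "r * nat \<bar>x\<bar> + r * nat \<bar>y\<bar> \<le> r * n + r * n" using xy by (intro add_mono mult_left_mono) auto
      also have "\<dots> \<le> c * n + c" unfolding c_def by (simp add: algebra_simps)
      finally show "b \<in> word_ball G S (c * n + c)" using wbpsi xy(1) wb_mono by blast
    qed
    have fib: "\<forall>b\<in>Bn. card {b'\<in>Bn. aut_orbit G b' = aut_orbit G b} \<le> D"
    proof
      fix b assume b: "b \<in> Bn"
      have sub: "{b'\<in>Bn. aut_orbit G b' = aut_orbit G b} \<subseteq> aut_orbit G b \<inter> A"
      proof
        fix b' assume "b' \<in> {b'\<in>Bn. aut_orbit G b' = aut_orbit G b}"
        then have b': "b' \<in> Bn" "aut_orbit G b' = aut_orbit G b" by auto
        have "b' \<in> aut_orbit G b'" unfolding aut_orbit_def using id_iso by (metis id_apply image_eqI)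
        then show "b' \<in> aut_orbit G b \<inter> A" using b' BA by auto
      qed
      have "b \<in> A" using b BA by blast
      then show "card {b'\<in>Bn. aut_orbit G b' = aut_orbit G b} \<le> D"
        using D card_mono[OF _ sub] by (meson order_trans)
    qed
    have "n^2 \<le> (2*n+1) * (2*n+1)" by (simp add: power2_eq_square)
    also have "\<dots> = card Bn" using cB by simp
    also have "\<dots> \<le> D * card (aut_orbit G ` Bn)" by (rule card_fiber[OF fB fib])
    also have "\<dots> \<le> D * aut_growth G S (c * n + c)"
      unfolding aut_growth_def using Bwb wb_fin[OF Sf] by (intro mult_left_mono card_mono) auto
    also have "\<dots> \<le> c * aut_growth G S (c * n + c)" using Dc by (rule mult_le_mono1)
    also have "\<dots> \<le> c * aut_growth G S (c * n + c) + c" by simp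
    finally show ?thesis .
  qed
  moreover have "c \<noteq> 0" unfolding c_def by simp
  ultimately show ?thesis unfolding growth_le_def by blast
qed

end

theorem mainTheorem10:
  fixes G :: "('a, 'b) monoid_scheme" and A :: "'a set"
  assumes "group G"
    and "A \<lhd> G"
    and "finite (rcosets\<^bsub>G\<^esub> A)"
    and "G\<lparr>carrier := A\<rparr> \<cong> DirProd integer_group integer_group"
    and "\<exists>g \<in> carrier G. (\<exists>a \<in> A. inv\<^bsub>G\<^esub> g \<otimes>\<^bsub>G\<^esub> a \<otimes>\<^bsub>G\<^esub> g \<noteq> a)
                      \<and> (\<exists>a \<in> A. inv\<^bsub>G\<^esub> g \<otimes>\<^bsub>G\<^esub> a \<otimes>\<^bsub>G\<^esub> g \<noteq> inv\<^bsub>G\<^esub> a)"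
  shows "quadratic_aut_growth G"
proof -
  obtain phi where phi: "phi \<in> iso (G\<lparr>carrier := A\<rparr>) (DirProd integer_group integer_group)"
    using assms(4) unfolding is_iso_def by blast
  have bij: "bij_betw phi A UNIV" using phi unfolding iso_def by (simp add: DirProd_def)
  have hom: "\<And>x y. x \<in> A \<Longrightarrow> y \<in> A \<Longrightarrow> phi (x \<otimes>\<^bsub>G\<^esub> y) = (fst (phi x) + fst (phi y), snd (phi x) + snd (phi y))"
    using phi unfolding iso_def hom_def by (auto simp: DirProd_def split: prod.splits)
  have sgA: "subgroup A G" using assms(2) normal_imp_subgroup by blast
  define psi where "psi = (\<lambda>x y. inv_into A phi (x, y))"
  have inj: "inj_on phi A" and surj: "phi ` A = UNIV" using bij unfolding bij_betw_def by auto
  have psi_in: "psi x y \<in> A" for x y unfolding psi_def using surj by (simp add: inv_into_into)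
  have phipsi: "phi (psi x y) = (x, y)" for x y unfolding psi_def using surj by (simp add: f_inv_into_f)
  have padd: "psi (x + x') (y + y') = psi x y \<otimes>\<^bsub>G\<^esub> psi x' y'" for x x' y y'
  proof -
    have m: "psi x y \<otimes>\<^bsub>G\<^esub> psi x' y' \<in> A" by (rule subgroup.m_closed[OF sgA psi_in psi_in])
    have "phi (psi x y \<otimes>\<^bsub>G\<^esub> psi x' y') = (fst (phi (psi x y)) + fst (phi (psi x' y')), snd (phi (psi x y)) + snd (phi (psi x' y')))"
      by (rule hom[OF psi_in psi_in])
    also have "\<dots> = (x + x', y + y')" by (simp only: phipsi fst_conv snd_conv)
    also have "\<dots> = phi (psi (x + x') (y + y'))" by (simp only: phipsi)
    finally have e: "phi (psi x y \<otimes>\<^bsub>G\<^esub> psi x' y') = phi (psi (x + x') (y + y'))" .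
    show ?thesis using inj_onD[OF inj e m psi_in] by (rule sym)
  qed
  have pinj: "psi x y = psi x' y' \<Longrightarrow> x = x' \<and> y = y'" for x y x' y'
    using phipsi by (metis prod.inject)
  have psurj: "a \<in> A \<Longrightarrow> \<exists>x y. a = psi x y" for a
  proof -
    assume "a \<in> A"
    then have "psi (fst (phi a)) (snd (phi a)) = a" unfolding psi_def using inj by simp
    then show ?thesis by metis
  qed
  have ax: "vz2 G A psi"
  proof (rule vz2.intro[OF assms(1)], rule vz2_axioms.intro)
    show "A \<lhd> G" by (rule assms(2))
    show "finite (rcosets\<^bsub>G\<^esub> A)" by (rule assms(3))
    show "psi x y \<in> A" for x y by (rule psi_in)
    show "psi (x + x') (y + y') = psi x y \<otimes>\<^bsub>G\<^esub> psi x' y'" for x x' y y' by (rule padd)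
    show "psi x y = psi x' y' \<Longrightarrow> x = x' \<and> y = y'" for x y x' y' by (rule pinj)
    show "a \<in> A \<Longrightarrow> \<exists>x y. a = psi x y" for a by (rule psurj)
  qed
  interpret vz2 G A psi by (rule ax)
  obtain g where g: "g \<in> carrier G" "\<exists>a \<in> A. inv\<^bsub>G\<^esub> g \<otimes>\<^bsub>G\<^esub> a \<otimes>\<^bsub>G\<^esub> g \<noteq> a"
      "\<exists>a \<in> A. inv\<^bsub>G\<^esub> g \<otimes>\<^bsub>G\<^esub> a \<otimes>\<^bsub>G\<^esub> g \<noteq> inv\<^bsub>G\<^esub> a" using assms(5) by blast
  have ns: "\<not> scalar (act g)" by (rule nonscalar[OF g])
  obtain D where D: "\<forall>a\<in>A. finite (aut_orbit G a \<inter> A) \<and> card (aut_orbit G a \<inter> A) \<le> D"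
    using orbit_bound[OF g(1) ns] by blast
  show ?thesis unfolding quadratic_aut_growth_def growth_equiv_def
    using exists_fgs ub lb[OF _ D] by blast
qed

end
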